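(* Let $\mathbb{X}$ be a set, $f:\mathbb{X}\to\mathbb{X}$ a bijection, $h:\mathbb{X}\to\mathbb{R}$ bounded with $\upsilon_h=\sup_{x\in\mathbb{X}}|h(x)|$, $m\ge1$ and $\ell>m$ integers, and $\beta\in(0,1)$. For $x\in\mathbb{X}$ and $k\in\{0,\dots,m-1\}$ let $$\zeta_k(x)=\sum_{t=0}^\infty\binom{k+t}{k}\beta^t(1-\beta)^{k+1}h\big(f^{-(k+t+1)}(x)\big),\qquad \tilde z_k(x)=\sum_{t=0}^{\ell-m}\binom{k+t}{k}\beta^t(1-\beta)^{k+1}h\big(f^{-(k+t+1)}(x)\big),$$ and $\zeta(x)=(\zeta_0(x),\dots,\zeta_{m-1}(x))$, $\tilde z(x)=(\tilde z_0(x),\dots,\tilde z_{m-1}(x))$. Suppose $\tilde\beta=\beta\big(1+\frac{m-1}{\ell-m}\big)<1$, i.e., $\ell>m+\frac{m-1}{\beta^{-1}-1}$. Then for every $x\in\mathbb{X}$, $$\|\tilde z(x)-\zeta(x)\|\le\binom{\ell-1}{m-1}\sqrt m\,\upsilon_h\,\frac{1-\beta}{1-\tilde\beta}\,\tilde\beta\,\beta^{\ell-m}.$$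
   Context: $\|\cdot\|$ is the Euclidean norm on $\mathbb{R}^m$; $f^{-j}$ is the $j$-fold composition of $f^{-1}$. In the paper, $\tilde z(x^{(i)})$ is computed from a backward orbit $x^{(i)},f^{-1}(x^{(i)}),\dots,f^{-\ell}(x^{(i)})$ of a sample point. *)

theory Defs
  imports "HOL-Analysis.Analysis"
begin

definition finv_pow :: "('a \<Rightarrow> 'a) \<Rightarrow> nat \<Rightarrow> 'a \<Rightarrow> 'a" where
  "finv_pow f j = (inv f) ^^ j"

definition zeta_k :: "('a \<Rightarrow> 'a) \<Rightarrow> ('a \<Rightarrow> real) \<Rightarrow> real \<Rightarrow> nat \<Rightarrow> 'a \<Rightarrow> real" where
  "zeta_k f h \<beta> k x =
     (\<Sum>t. real ((k + t) choose k) * \<beta> ^ t * (1 - \<beta>) ^ (k + 1) * h (finv_pow f (k + t + 1) x))"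

definition ztilde_k :: "('a \<Rightarrow> 'a) \<Rightarrow> ('a \<Rightarrow> real) \<Rightarrow> real \<Rightarrow> nat \<Rightarrow> nat \<Rightarrow> nat \<Rightarrow> 'a \<Rightarrow> real" where
  "ztilde_k f h \<beta> m L k x =
     (\<Sum>t=0..L - m. real ((k + t) choose k) * \<beta> ^ t * (1 - \<beta>) ^ (k + 1) * h (finv_pow f (k + t + 1) x))"

end

theory Submission imports Defs begin

lemma choose_ratio: "real ((k + Suc s) choose k) * real (Suc s) = real ((k + s) choose k) * real (Suc (k + s))"
proof -
  have e1: "(k + Suc s) choose k = (Suc (k+s)) choose (Suc s)"
    using binomial_symmetric[of k "k + Suc s"] by simp
  have e2: "(k + s) choose k = (k+s) choose s"
    using binomial_symmetric[of k "k + s"] by simp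
  have "Suc (k+s) * ((k+s) choose s) = (Suc (k+s) choose Suc s) * Suc s"
    by (rule Suc_times_binomial_eq)
  then have "real (Suc (k+s) * ((k+s) choose s)) = real ((Suc (k+s) choose Suc s) * Suc s)" by simp
  then show ?thesis unfolding e1 e2 of_nat_mult by (simp add: mult.commute)
qed

lemma ratio_step:
  fixes \<beta> :: real
  assumes "0 < \<beta>" "k \<le> m - 1" "1 \<le> n" "n \<le> s"
  shows "real ((k + Suc s) choose k) * \<beta> ^ Suc s \<le> (\<beta> * (1 + real (m - 1) / real n)) * (real ((k + s) choose k) * \<beta> ^ s)"
proof -
  have q: "real (Suc (k+s)) / real (Suc s) \<le> 1 + real (m - 1) / real n"
  proof -
    have "real (Suc (k+s)) / real (Suc s) = 1 + real k / real (Suc s)" by (simp add: field_simps)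
    moreover have "real k / real (Suc s) \<le> real (m - 1) / real n"
      using assms by (intro frac_le) auto
    ultimately show ?thesis by simp
  qed
  have "real ((k + Suc s) choose k) = real ((k + s) choose k) * (real (Suc (k + s)) / real (Suc s))"
    using choose_ratio[of k s] by (simp add: field_simps)
  then have "real ((k + Suc s) choose k) * \<beta> ^ Suc s = \<beta> * (real (Suc (k + s)) / real (Suc s)) * (real ((k + s) choose k) * \<beta> ^ s)"
    by simp
  also have "\<dots> \<le> (\<beta> * (1 + real (m - 1) / real n)) * (real ((k + s) choose k) * \<beta> ^ s)"
    using q assms by (intro mult_right_mono mult_left_mono) auto
  finally show ?thesis .
qed

lemma geo_bound:
  fixes \<beta> :: real
  assumes "0 < \<beta>" "k \<le> m - 1" "1 \<le> n"
  shows "real ((k + (t + n + 1)) choose k) * \<beta> ^ (t + n + 1) \<le> (\<beta> * (1 + real (m - 1) / real n)) ^ Suc t * (real ((k + n) choose k) * \<beta> ^ n)"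
proof (induction t)
  case 0
  then show ?case using ratio_step[OF assms, of n] by simp
next
  case (Suc t)
  have "real ((k + (Suc t + n + 1)) choose k) * \<beta> ^ (Suc t + n + 1) \<le> (\<beta> * (1 + real (m - 1) / real n)) * (real ((k + (t + n + 1)) choose k) * \<beta> ^ (t + n + 1))"
    using ratio_step[OF assms, of "t + n + 1"] by simp
  also have "\<dots> \<le> (\<beta> * (1 + real (m - 1) / real n)) * ((\<beta> * (1 + real (m - 1) / real n)) ^ Suc t * (real ((k + n) choose k) * \<beta> ^ n))"
    using Suc assms by (intro mult_left_mono) auto
  finally show ?case by (simp add: mult_ac)
qed

lemma comp_bound:
  fixes f :: "'a \<Rightarrow> 'a" and h :: "'a \<Rightarrow> real" and m L k :: nat and \<beta> u :: real
  assumes hb: "\<And>y. \<bar>h y\<bar> \<le> u"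
    and "m \<ge> 1" and "L > m" and "k < m"
    and "0 < \<beta>" and "\<beta> < 1"
    and bt1: "\<beta> * (1 + real (m - 1) / real (L - m)) < 1"
  shows "\<bar>ztilde_k f h \<beta> m L k x - zeta_k f h \<beta> k x\<bar>
     \<le> real ((L - 1) choose (m - 1)) * u
        * ((1 - \<beta>) / (1 - \<beta> * (1 + real (m - 1) / real (L - m))))
        * (\<beta> * (1 + real (m - 1) / real (L - m))) * \<beta> ^ (L - m)"
proof -
  define n where "n = L - m"
  define bt where "bt = \<beta> * (1 + real (m - 1) / real n)"
  define g where "g t = real ((k + t) choose k) * \<beta> ^ t * (1 - \<beta>) ^ (k + 1) * h (finv_pow f (k + t + 1) x)" for t
  define A where "A = real ((k + n) choose k) * \<beta> ^ n"
  define c where "c = (1 - \<beta>) ^ (k + 1) * u * A"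
  have n1: "1 \<le> n" using assms unfolding n_def by auto
  have bt0: "0 < bt" unfolding bt_def using assms by (simp add: add_pos_nonneg)
  have bt1': "bt < 1" using bt1 unfolding bt_def n_def .
  have u0: "0 \<le> u" using hb[of undefined] by linarith
  have A0: "0 \<le> A" unfolding A_def using assms by simp
  have c0: "0 \<le> c" unfolding c_def using assms u0 A0 by simp
  have gb: "\<bar>g (t + n + 1)\<bar> \<le> c * bt * bt ^ t" for t
  proof -
    have "\<bar>g (t + n + 1)\<bar> = real ((k + (t + n + 1)) choose k) * \<beta> ^ (t + n + 1) * (1 - \<beta>) ^ (k + 1) * \<bar>h (finv_pow f (k + (t + n + 1) + 1) x)\<bar>"
      unfolding g_def using assms by (simp add: abs_mult)
    also have "\<dots> \<le> (bt ^ Suc t * A) * (1 - \<beta>) ^ (k + 1) * u"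
    proof -
      have gg: "real ((k + (t + n + 1)) choose k) * \<beta> ^ (t + n + 1) \<le> bt ^ Suc t * A"
        using geo_bound[of \<beta> k m n t] assms n1 unfolding bt_def A_def by simp
      have p0: "0 \<le> (1 - \<beta>) ^ (k + 1)" using assms by simp
      have c1: "real ((k + (t + n + 1)) choose k) * \<beta> ^ (t + n + 1) * (1 - \<beta>) ^ (k + 1) \<le> bt ^ Suc t * A * (1 - \<beta>) ^ (k + 1)"
        by (rule mult_right_mono[OF gg p0])
      have c2: "0 \<le> bt ^ Suc t * A * (1 - \<beta>) ^ (k + 1)" using bt0 A0 p0 by simp
      show ?thesis
        by (rule mult_mono[OF c1 hb c2 abs_ge_zero])
    qed
    finally show ?thesis unfolding c_def by (simp add: mult_ac)
  qed
  have sg: "summable (\<lambda>t. c * bt * bt ^ t)"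
    using bt0 bt1' by (intro summable_mult summable_geometric) auto
  have sa: "summable (\<lambda>t. \<bar>g (t + n + 1)\<bar>)"
    by (rule summable_comparison_test[OF _ sg]) (use gb in auto)
  have s1: "summable (\<lambda>t. g (t + (n + 1)))"
    using summable_rabs_cancel[OF sa] by (simp add: add.assoc)
  then have s: "summable g" by (subst (asm) summable_iff_shift)
  have zt: "ztilde_k f h \<beta> m L k x = (\<Sum>i<n+1. g i)"
    unfolding ztilde_k_def g_def n_def
    by (rule sum.cong) auto
  have ze: "zeta_k f h \<beta> k x = (\<Sum>t. g (t + (n + 1))) + (\<Sum>i<n+1. g i)"
    unfolding zeta_k_def g_def[symmetric] by (rule suminf_split_initial_segment[OF s])
  have "\<bar>ztilde_k f h \<beta> m L k x - zeta_k f h \<beta> k x\<bar> = \<bar>\<Sum>t. g (t + n + 1)\<bar>"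
    using zt ze by (simp add: add.assoc)
  also have "\<dots> \<le> (\<Sum>t. \<bar>g (t + n + 1)\<bar>)" by (rule summable_rabs[OF sa])
  also have "\<dots> \<le> (\<Sum>t. c * bt * bt ^ t)" by (rule suminf_le[OF gb sa sg])
  also have "\<dots> = c * bt / (1 - bt)"
    using bt0 bt1' by (simp add: suminf_mult suminf_geometric divide_simps)
  also have "\<dots> \<le> real ((L - 1) choose (m - 1)) * u * ((1 - \<beta>) / (1 - bt)) * bt * \<beta> ^ n"
  proof -
    have "A \<le> real ((L - 1) choose (m - 1)) * \<beta> ^ n"
    proof -
      have "(k + n) choose k = (k + n) choose n" using binomial_symmetric[of k "k+n"] by simp
      also have "\<dots> \<le> (m - 1 + n) choose n" by (rule binomial_right_mono) (use assms in auto)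
      also have "\<dots> = (L - 1) choose (m - 1)"
        using binomial_symmetric[of n "m - 1 + n"] assms unfolding n_def by simp
      finally show ?thesis unfolding A_def using assms by (intro mult_right_mono) auto
    qed
    moreover have "(1 - \<beta>) ^ (k + 1) \<le> 1 - \<beta>"
      using assms power_decreasing[of 1 "k+1" "1 - \<beta>"] by simp
    ultimately have "c \<le> (1 - \<beta>) * u * (real ((L - 1) choose (m - 1)) * \<beta> ^ n)"
      unfolding c_def using assms u0 A0 by (intro mult_mono) auto
    then have "c * (bt / (1 - bt)) \<le> (1 - \<beta>) * u * (real ((L - 1) choose (m - 1)) * \<beta> ^ n) * (bt / (1 - bt))"
      using bt0 bt1' by (intro mult_right_mono) auto
    then show ?thesis by (simp add: mult_ac)
  qed
  finally show ?thesis unfolding bt_def n_def .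
qed

theorem lemma2:
  fixes f :: "'a \<Rightarrow> 'a" and h :: "'a \<Rightarrow> real" and m L :: nat and \<beta> :: real
  assumes "bij f"
    and "bounded (range h)"
    and "m \<ge> 1" and "L > m"
    and "0 < \<beta>" and "\<beta> < 1"
    and "\<beta> * (1 + real (m - 1) / real (L - m)) < 1"
  shows "\<forall>x. L2_set (\<lambda>k. ztilde_k f h \<beta> m L k x - zeta_k f h \<beta> k x) {..<m}
     \<le> real ((L - 1) choose (m - 1)) * sqrt (real m) * (SUP y. \<bar>h y\<bar>)
        * ((1 - \<beta>) / (1 - \<beta> * (1 + real (m - 1) / real (L - m))))
        * (\<beta> * (1 + real (m - 1) / real (L - m))) * \<beta> ^ (L - m)"
proof
  fix x
  define u where "u = (SUP y. \<bar>h y\<bar>)"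
  obtain B where B: "\<And>y. norm (h y) \<le> B" using assms(2) unfolding bounded_iff by auto
  have bdd: "bdd_above (range (\<lambda>y. \<bar>h y\<bar>))" using B by (intro bdd_aboveI2) auto
  have hb: "\<bar>h y\<bar> \<le> u" for y unfolding u_def by (rule cSUP_upper[OF _ bdd]) auto
  define C where "C = real ((L - 1) choose (m - 1)) * u
        * ((1 - \<beta>) / (1 - \<beta> * (1 + real (m - 1) / real (L - m))))
        * (\<beta> * (1 + real (m - 1) / real (L - m))) * \<beta> ^ (L - m)"
  have cb: "\<bar>ztilde_k f h \<beta> m L k x - zeta_k f h \<beta> k x\<bar> \<le> C" if "k < m" for k
    unfolding C_def using comp_bound[OF hb assms(3,4) that assms(5,6,7)] .
  have "L2_set (\<lambda>k. ztilde_k f h \<beta> m L k x - zeta_k f h \<beta> k x) {..<m}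
      = sqrt (\<Sum>k<m. (ztilde_k f h \<beta> m L k x - zeta_k f h \<beta> k x)^2)"
    unfolding L2_set_def by simp
  also have "\<dots> \<le> sqrt (\<Sum>k<m. C^2)"
  proof (intro real_sqrt_le_mono sum_mono)
    fix k assume "k \<in> {..<m}"
    then have "\<bar>ztilde_k f h \<beta> m L k x - zeta_k f h \<beta> k x\<bar> \<le> C" using cb by auto
    then show "(ztilde_k f h \<beta> m L k x - zeta_k f h \<beta> k x)^2 \<le> C^2"
      by (metis abs_ge_zero abs_le_square_iff abs_of_nonneg order_trans)
  qed
  also have "\<dots> = sqrt (real m) * \<bar>C\<bar>" by (simp add: real_sqrt_mult)
  also have "\<dots> = sqrt (real m) * C"
  proof -
    have "0 \<le> C" using cb[of 0] assms(3) by linarith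
    then show ?thesis by simp
  qed
  finally show "L2_set (\<lambda>k. ztilde_k f h \<beta> m L k x - zeta_k f h \<beta> k x) {..<m}
     \<le> real ((L - 1) choose (m - 1)) * sqrt (real m) * (SUP y. \<bar>h y\<bar>)
        * ((1 - \<beta>) / (1 - \<beta> * (1 + real (m - 1) / real (L - m))))
        * (\<beta> * (1 + real (m - 1) / real (L - m))) * \<beta> ^ (L - m)"
    unfolding C_def u_def by (simp add: mult_ac)
qed

end
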